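(* Let $(\lambda_1,\lambda_2)$ and $(\mu_1,\mu_2)$ be two distinct partitions of $n$ with exactly two (positive) parts each. Then there exist commuting nilpotent $n\times n$ matrices $B,A$ over $\mathbb{F}$ with $\mathrm{sh}(B)=(\lambda_1,\lambda_2)$ and $\mathrm{sh}(A)=(\mu_1,\mu_2)$ if and only if $n$ is even and one of the two partitions equals $(\frac n2,\frac n2)$ and the other equals $(\frac n2+1,\frac n2-1)$.
   Context: $\mathbb{F}$ is an algebraically closed field of characteristic $0$. For a nilpotent matrix $A$, $\mathrm{sh}(A)$ is the partition of $n$ given by the sizes of the Jordan blocks of its Jordan canonical form. *)

theory Defs
  imports "Jordan_Normal_Form.Jordan_Normal_Form_Uniqueness"
begin

definition nilpotent_mat :: "nat \<Rightarrow> 'a :: field mat \<Rightarrow> bool" where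
  "nilpotent_mat n A \<longleftrightarrow> A \<in> carrier_mat n n \<and> (\<exists>k. A ^\<^sub>m k = 0\<^sub>m n n)"

definition has_shape :: "'a :: field mat \<Rightarrow> nat multiset \<Rightarrow> bool" where
  "has_shape A p \<longleftrightarrow> (\<exists>n_as. jordan_nf A n_as \<and> mset (map fst n_as) = p)"

definition alg_closed_field :: "'a :: field itself \<Rightarrow> bool" where
  "alg_closed_field _ \<longleftrightarrow> (\<forall>p :: 'a poly. degree p \<ge> 1 \<longrightarrow> (\<exists>x. poly p x = 0))"

end

theory Submission
  imports Defs
begin

lemma mat_eq_by_vec:
  fixes A B :: "'a :: field mat"
  assumes "A \<in> carrier_mat n m" "B \<in> carrier_mat n m"
    and "\<And>w. w \<in> carrier_vec m \<Longrightarrow> A *\<^sub>v w = B *\<^sub>v w"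
  shows "A = B"
proof (rule eq_matI)
  fix i j assume i: "i < dim_row B" and j: "j < dim_col B"
  have "\<And>C :: 'a mat. C \<in> carrier_mat n m \<Longrightarrow> i < n \<Longrightarrow> j < m \<Longrightarrow> (C *\<^sub>v unit_vec m j) $ i = C $$ (i,j)"
    by (simp add: scalar_prod_def unit_vec_def if_distrib[of "\<lambda>x. _ * x"] sum.delta' cong: if_cong)
  then show "A $$ (i, j) = B $$ (i, j)" using assms i j by (metis carrier_matD unit_vec_carrier)
qed (use assms in auto)

lemma jm2_index:
  assumes "i < p + q" "j < p + q"
  shows "jordan_matrix [(p,x),(q,y)] $$ (i,j) =
    (if i = j then (if i < p then x else y) else if Suc i = j \<and> j \<noteq> p then 1 else 0)"
  using assms by (auto simp: jordan_matrix_def Let_def jordan_block_def)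

lemma jm2_mult:
  fixes x y :: "'a :: field"
  assumes "w \<in> carrier_vec (p+q)" "i < p + q"
  shows "(jordan_matrix [(p,x),(q,y)] *\<^sub>v w) $ i =
    (if i < p then x else y) * w $ i + (if Suc i < p + q \<and> Suc i \<noteq> p then w $ Suc i else 0)"
proof -
  have "(jordan_matrix [(p,x),(q,y)] *\<^sub>v w) $ i = (\<Sum>j<p+q. jordan_matrix [(p,x),(q,y)] $$ (i,j) * w $ j)"
    using assms by (simp add: scalar_prod_def lessThan_atLeast0)
  also have "\<dots> = (\<Sum>j<p+q. (if j = i then (if i < p then x else y) * w $ i else 0)
     + (if j = Suc i then (if Suc i \<noteq> p then w $ Suc i else 0) else 0))"
    by (rule sum.cong, auto simp: jm2_index assms)
  also have "\<dots> = (if i < p then x else y) * w $ i + (if Suc i < p + q \<and> Suc i \<noteq> p then w $ Suc i else 0)"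
    unfolding sum.distrib using assms by (simp add: sum.delta)
  finally show ?thesis .
qed

lemma zero_mat_mult_vec[simp]: "v \<in> carrier_vec m \<Longrightarrow> 0\<^sub>m n m *\<^sub>v v = 0\<^sub>v n"
  by (intro eq_vecI) (auto simp: scalar_prod_def)

lemma eigvec_pow:
  fixes X :: "'a :: field mat"
  assumes X: "X \<in> carrier_mat n n" and v: "v \<in> carrier_vec n" and e: "X *\<^sub>v v = c \<cdot>\<^sub>v v"
  shows "X ^\<^sub>m k *\<^sub>v v = c ^ k \<cdot>\<^sub>v v"
proof (induct k)
  case 0 then show ?case using v X by simp
next
  case (Suc k)
  have "X ^\<^sub>m Suc k *\<^sub>v v = X ^\<^sub>m k *\<^sub>v (X *\<^sub>v v)"
    using X v by (simp add: assoc_mult_mat_vec[of _ n n _ n])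
  also have "\<dots> = c \<cdot>\<^sub>v (X ^\<^sub>m k *\<^sub>v v)" unfolding e using X v by (simp add: mult_mat_vec[of _ n n])
  also have "\<dots> = (c * c ^ k) \<cdot>\<^sub>v v" unfolding Suc by (rule smult_smult_assoc)
  finally show ?case by simp
qed

lemma jnf2_ev_zero:
  fixes X :: "'a :: field mat"
  assumes wit: "similar_mat_wit X (jordan_matrix [(p,x),(q,y)]) P Q"
    and X: "X \<in> carrier_mat n n" and nil: "X ^\<^sub>m k = 0\<^sub>m n n" and p: "p \<ge> 1" and q: "q \<ge> 1"
  shows "x = 0" "y = 0" "n = p + q"
proof -
  let ?J = "jordan_matrix [(p,x),(q,y)]"
  have dims: "?J \<in> carrier_mat n n" "P \<in> carrier_mat n n" "Q \<in> carrier_mat n n"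
    by (rule similar_mat_witD2[OF X wit])+
  from dims(1) have "dim_row ?J = n" by (rule carrier_matD)
  then show n: "n = p + q" by simp
  have Jk: "?J ^\<^sub>m k = Q * X ^\<^sub>m k * P"
    using similar_mat_wit_pow_id[OF similar_mat_wit_sym[OF wit]] .
  also have "\<dots> = 0\<^sub>m n n" unfolding nil right_mult_zero_mat[OF dims(3)] left_mult_zero_mat[OF dims(2)] ..
  finally have Jk0: "?J ^\<^sub>m k = 0\<^sub>m n n" .
  have u0: "unit_vec n 0 \<in> carrier_vec n" "unit_vec n p \<in> carrier_vec n" by (rule unit_vec_carrier)+
  have "?J *\<^sub>v unit_vec n 0 = x \<cdot>\<^sub>v unit_vec n 0"
  proof (rule eq_vecI)
    fix i assume "i < dim_vec (x \<cdot>\<^sub>v unit_vec n 0)"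
    then have i: "i < p + q" using n by simp
    show "(?J *\<^sub>v unit_vec n 0) $ i = (x \<cdot>\<^sub>v unit_vec n 0) $ i"
      unfolding jm2_mult[OF u0(1)[unfolded n] i] using i p n by (simp add: index_unit_vec jm2_index)
  qed (use n in simp)
  from eigvec_pow[OF dims(1) u0(1) this, of k] Jk0
  have "x ^ k \<cdot>\<^sub>v unit_vec n 0 = 0\<^sub>v n" using u0 by simp
  then have "(x ^ k \<cdot>\<^sub>v unit_vec n 0) $ 0 = 0" using n p by simp
  then show "x = 0" using n p by simp
  have "?J *\<^sub>v unit_vec n p = y \<cdot>\<^sub>v unit_vec n p"
  proof (rule eq_vecI)
    fix i assume "i < dim_vec (y \<cdot>\<^sub>v unit_vec n p)"
    then have i: "i < p + q" using n by simp
    show "(?J *\<^sub>v unit_vec n p) $ i = (y \<cdot>\<^sub>v unit_vec n p) $ i"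
      unfolding jm2_mult[OF u0(2)[unfolded n] i] using i q n by (simp add: index_unit_vec jm2_index)
  qed (use n in simp)
  from eigvec_pow[OF dims(1) u0(2) this, of k] Jk0
  have "y ^ k \<cdot>\<^sub>v unit_vec n p = 0\<^sub>v n" using u0 by simp
  then have "(y ^ k \<cdot>\<^sub>v unit_vec n p) $ p = 0" using n q by simp
  then show "y = 0" using n q by simp
qed

lemma jm2_pow_mult:
  assumes w: "w \<in> carrier_vec (p+q)" and i: "i < p + q"
  shows "(jordan_matrix [(p,0::'a::field),(q,0)] ^\<^sub>m m *\<^sub>v w) $ i =
    (if (i < p \<and> i + m < p) \<or> (p \<le> i \<and> i + m < p + q) then w $ (i + m) else 0)"
  using w i
proof (induct m arbitrary: i w)
  case 0
  then show ?case by (cases "i < p") auto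
next
  case (Suc m)
  let ?J = "jordan_matrix [(p,0::'a),(q,0)]"
  have J: "?J \<in> carrier_mat (p+q) (p+q)" using jordan_matrix_carrier[of "[(p,0::'a),(q,0)]"] by simp
  have "?J ^\<^sub>m Suc m *\<^sub>v w = ?J ^\<^sub>m m *\<^sub>v (?J *\<^sub>v w)"
    using J Suc(2) by (simp add: assoc_mult_mat_vec[of _ "p+q" "p+q" _ "p+q"])
  then have "(?J ^\<^sub>m Suc m *\<^sub>v w) $ i = (?J ^\<^sub>m m *\<^sub>v (?J *\<^sub>v w)) $ i" by simp
  also have "\<dots> = (if (i < p \<and> i + m < p) \<or> (p \<le> i \<and> i + m < p + q) then (?J *\<^sub>v w) $ (i + m) else 0)"
    by (rule Suc(1), use J Suc(2,3) in auto)
  also have "\<dots> = (if (i < p \<and> i + Suc m < p) \<or> (p \<le> i \<and> i + Suc m < p + q) then w $ (i + Suc m) else 0)"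
  proof (cases "(i < p \<and> i + m < p) \<or> (p \<le> i \<and> i + m < p + q)")
    case True
    then have im: "i + m < p + q" by auto
    show ?thesis unfolding if_P[OF True] jm2_mult[OF Suc(2) im] using True by auto
  next
    case False
    then show ?thesis by auto
  qed
  finally show ?case .
qed

lemma jm2_pow_zero:
  assumes "m \<ge> p" "m \<ge> q"
  shows "jordan_matrix [(p,0::'a::field),(q,0)] ^\<^sub>m m = 0\<^sub>m (p+q) (p+q)"
proof (rule mat_eq_by_vec)
  fix w :: "'a vec" assume w: "w \<in> carrier_vec (p+q)"
  show "jordan_matrix [(p,0::'a::field),(q,0)] ^\<^sub>m m *\<^sub>v w = 0\<^sub>m (p+q) (p+q) *\<^sub>v w"
  proof (rule eq_vecI)
    fix i assume "i < dim_vec (0\<^sub>m (p+q) (p+q) *\<^sub>v w)"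
    then have i: "i < p + q" by simp
    have "(jordan_matrix [(p,0::'a::field),(q,0)] ^\<^sub>m m *\<^sub>v w) $ i = 0"
      unfolding jm2_pow_mult[OF w i] using assms by auto
    then show "(jordan_matrix [(p,0::'a::field),(q,0)] ^\<^sub>m m *\<^sub>v w) $ i = (0\<^sub>m (p+q) (p+q) *\<^sub>v w) $ i"
      using w i by simp
  qed simp
qed auto

lemma char_matrix_zero: "X \<in> carrier_mat n n \<Longrightarrow> char_matrix (X :: 'a :: field mat) 0 = X"
  unfolding char_matrix_def by (intro eq_matI, auto)

lemma shape2:
  fixes X :: "'a :: field mat"
  assumes nil: "nilpotent_mat n X" and sh: "has_shape X {#c,d#}" and c: "c \<ge> 1" and d: "d \<ge> 1"
  obtains p q P Q where "similar_mat_wit X (jordan_matrix [(p,0),(q,0)]) P Q"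
    "jordan_nf X [(p,0),(q,0)]" "(p = c \<and> q = d) \<or> (p = d \<and> q = c)" "n = c + d"
proof -
  from sh obtain n_as where jnf: "jordan_nf X n_as" and ms: "mset (map fst n_as) = {#c,d#}"
    unfolding has_shape_def by auto
  from ms have "length n_as = 2" by (metis size_mset length_map size_add_mset size_empty One_nat_def numeral_2_eq_2)
  then obtain p x q y where nas: "n_as = [(p,x),(q,y)]"
    by (metis (no_types, opaque_lifting) One_nat_def Suc_length_conv length_0_conv numeral_2_eq_2 surj_pair)
  from ms nas have pq: "(p = c \<and> q = d) \<or> (p = d \<and> q = c)"
    by (auto simp: add_eq_conv_ex)
  from jnf nas obtain P Q where wit: "similar_mat_wit X (jordan_matrix [(p,x),(q,y)]) P Q"
    unfolding jordan_nf_def similar_mat_def by auto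
  from nil obtain k where X: "X \<in> carrier_mat n n" and k: "X ^\<^sub>m k = 0\<^sub>m n n"
    unfolding nilpotent_mat_def by auto
  have p1: "p \<ge> 1" "q \<ge> 1" using pq c d by auto
  note ev = jnf2_ev_zero[OF wit X k p1]
  show thesis
    by (rule that[of p q P Q], insert wit jnf nas ev pq, auto)
qed

lemma shape2_facts:
  fixes X :: "'a :: field mat"
  assumes nil: "nilpotent_mat n X" and sh: "has_shape X {#c,d#}" and c: "c \<ge> 1" and d: "d \<ge> 1"
  shows "kernel_dim X = 2" "\<And>m. m \<ge> c \<Longrightarrow> m \<ge> d \<Longrightarrow> X ^\<^sub>m m = 0\<^sub>m n n" "n = c + d"
proof -
  obtain p q P Q where wit: "similar_mat_wit X (jordan_matrix [(p,0),(q,0)]) P Q"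
    and jnf: "jordan_nf X [(p,0),(q,0)]" and pq: "(p = c \<and> q = d) \<or> (p = d \<and> q = c)" and n: "n = c + d"
    by (rule shape2[OF assms])
  show "n = c + d" by fact
  from nil have X: "X \<in> carrier_mat n n" unfolding nilpotent_mat_def by auto
  have "dim_gen_eigenspace X 0 1 = min 1 p + min 1 q"
    using dim_gen_eigenspace[OF jnf, of 0 1] by simp
  also have "\<dots> = 2" using pq c d by auto
  finally show "kernel_dim X = 2" unfolding dim_gen_eigenspace_def char_matrix_zero[OF X]
    using X by simp
  fix m assume m: "m \<ge> c" "m \<ge> d"
  have "X ^\<^sub>m m = P * (jordan_matrix [(p,0),(q,0)]) ^\<^sub>m m * Q" by (rule similar_mat_wit_pow_id[OF wit])
  also have "(jordan_matrix [(p,0::'a),(q,0)]) ^\<^sub>m m = 0\<^sub>m (p+q) (p+q)"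
    by (rule jm2_pow_zero, insert m pq, auto)
  also have "p + q = n" using pq n by auto
  also have "P * 0\<^sub>m n n * Q = 0\<^sub>m n n"
    using similar_mat_witD2(6,7)[OF X wit] by simp
  finally show "X ^\<^sub>m m = 0\<^sub>m n n" .
qed

context kernel
begin

lemma indep_private:
  assumes S: "S \<subseteq> mat_kernel A"
    and priv: "\<And>v. v \<in> S \<Longrightarrow> \<exists>i<nc. v $ i \<noteq> 0 \<and> (\<forall>w\<in>S. w \<noteq> v \<longrightarrow> w $ i = 0)"
  shows "Ker.lin_indpt S"
proof
  assume "Ker.lin_dep S"
  then obtain v a U where finU: "finite U" and US: "U \<subseteq> S"
      and lc: "lincomb a U = 0\<^sub>v nc" and vU: "v \<in> U" and av0: "a v \<noteq> 0"
    unfolding Ker.lin_dep_def by auto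
  from priv[of v] vU US obtain i where i: "i < nc" and vi: "v $ i \<noteq> 0"
    and oth: "\<And>w. w \<in> S \<Longrightarrow> w \<noteq> v \<Longrightarrow> w $ i = 0" by auto
  have "0 = lincomb a U $ i" using lc i by simp
  also have "\<dots> = (\<Sum>x\<in>U. a x * x $ i)" by (rule lincomb_index[OF i], use US S in auto)
  also have "\<dots> = a v * v $ i"
    by (rule sum.remove[OF finU vU, THEN trans], subst sum.neutral, use oth US in auto)
  finally show False using av0 vi by simp
qed

lemma fin_dim_ker: "Ker.fin_dim"
proof -
  from kernel_basis_exists[OF A] obtain B where "finite B" "Ker.basis B" by auto
  then show ?thesis unfolding Ker.fin_dim_def Ker.basis_def by auto
qed

lemma card_le_kernel_dim:
  assumes S: "S \<subseteq> mat_kernel A"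
    and priv: "\<And>v. v \<in> S \<Longrightarrow> \<exists>i<nc. v $ i \<noteq> 0 \<and> (\<forall>w\<in>S. w \<noteq> v \<longrightarrow> w $ i = 0)"
  shows "card S \<le> kernel_dim A"
  using Ker.li_le_dim(2)[OF fin_dim_ker _ indep_private[OF S priv]] S by simp

end


lemma mat_entry_unit:
  fixes C :: "'a :: field mat"
  assumes "C \<in> carrier_mat n m" "i < n" "j < m"
  shows "C $$ (i,j) = (C *\<^sub>v unit_vec m j) $ i"
  using assms by (simp add: scalar_prod_def unit_vec_def if_distrib[of "\<lambda>x. _ * x"] sum.delta' cong: if_cong)

lemma sum_single:
  assumes "finite S" "x \<in> S" "\<And>i. i \<in> S \<Longrightarrow> i \<noteq> x \<Longrightarrow> f i = 0"
  shows "sum f S = f x"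
  by (rule sum.remove[OF assms(1,2), THEN trans], subst sum.neutral, use assms(3) in auto)

lemma pow_mat_Suc_left:
  fixes M :: "'a :: field mat"
  assumes M: "M \<in> carrier_mat n n"
  shows "M ^\<^sub>m Suc j = M * M ^\<^sub>m j"
proof (induct j)
  case 0 then show ?case using M by simp
next
  case (Suc j)
  have "M ^\<^sub>m Suc (Suc j) = M ^\<^sub>m Suc j * M" by simp
  also have "\<dots> = (M * M ^\<^sub>m j) * M" using Suc by simp
  also have "\<dots> = M * (M ^\<^sub>m j * M)" by (rule assoc_mult_mat[OF M _ M], use M in simp)
  also have "M ^\<^sub>m j * M = M ^\<^sub>m Suc j" by simp
  finally show ?case .
qed

locale core2 =
  fixes n a b :: nat and E F :: "nat \<Rightarrow> nat" and J M :: "'a :: field mat"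
  assumes n_def: "n = a + b"
  and E_lt: "\<And>i. i < a \<Longrightarrow> E i < n" and F_lt: "\<And>i. i < b \<Longrightarrow> F i < n"
  and E_inj: "\<And>i j. i < a \<Longrightarrow> j < a \<Longrightarrow> E i = E j \<Longrightarrow> i = j"
  and F_inj: "\<And>i j. i < b \<Longrightarrow> j < b \<Longrightarrow> F i = F j \<Longrightarrow> i = j"
  and EF: "\<And>i j. i < a \<Longrightarrow> j < b \<Longrightarrow> E i \<noteq> F j"
  and J: "J \<in> carrier_mat n n" and M: "M \<in> carrier_mat n n"
  and JE: "\<And>w k. w \<in> carrier_vec n \<Longrightarrow> k < a \<Longrightarrow> (J *\<^sub>v w) $ E k = (if k = 0 then 0 else w $ E (k - 1))"
  and JF: "\<And>w k. w \<in> carrier_vec n \<Longrightarrow> k < b \<Longrightarrow> (J *\<^sub>v w) $ F k = (if k = 0 then 0 else w $ F (k - 1))"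
  and comm: "M * J = J * M"
begin

lemma image_eq: "E ` {..<a} \<union> F ` {..<b} = {..<n}"
proof (rule card_subset_eq)
  show "E ` {..<a} \<union> F ` {..<b} \<subseteq> {..<n}" using E_lt F_lt by auto
  have "card (E ` {..<a} \<union> F ` {..<b}) = card (E ` {..<a}) + card (F ` {..<b})"
    by (rule card_Un_disjoint, auto dest: EF)
  also have "card (E ` {..<a}) = a" by (subst card_image, auto intro!: inj_onI E_inj)
  also have "card (F ` {..<b}) = b" by (subst card_image, auto intro!: inj_onI F_inj)
  finally show "card (E ` {..<a} \<union> F ` {..<b}) = card {..<n}" using n_def by simp
qed simp

lemma cover: "r < n \<Longrightarrow> (\<exists>i<a. r = E i) \<or> (\<exists>i<b. r = F i)"
  using image_eq by auto

lemma vec_ext: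
  assumes v: "v \<in> carrier_vec n" and w: "w \<in> carrier_vec n"
    and e: "\<And>k. k < a \<Longrightarrow> v $ E k = w $ E k" and f: "\<And>k. k < b \<Longrightarrow> v $ F k = w $ F k"
  shows "v = w"
proof (rule eq_vecI)
  fix r assume "r < dim_vec w" then have "r < n" using w by simp
  then show "v $ r = w $ r" using cover e f by blast
qed (use v w in simp)

lemma sum_split: "(\<Sum>r<n. g r) = (\<Sum>i<a. g (E i)) + (\<Sum>i<b. g (F i))"
proof -
  have "(\<Sum>r<n. g r) = sum g (E ` {..<a} \<union> F ` {..<b})" unfolding image_eq ..
  also have "\<dots> = sum g (E ` {..<a}) + sum g (F ` {..<b})"
    by (rule sum.union_disjoint, auto dest: EF)
  also have "sum g (E ` {..<a}) = (\<Sum>i<a. g (E i))" by (subst sum.reindex, auto intro!: inj_onI E_inj)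
  also have "sum g (F ` {..<b}) = (\<Sum>i<b. g (F i))" by (subst sum.reindex, auto intro!: inj_onI F_inj)
  finally show ?thesis .
qed

definition eE :: "nat \<Rightarrow> 'a vec" where "eE i = unit_vec n (E i)"
definition fF :: "nat \<Rightarrow> 'a vec" where "fF i = unit_vec n (F i)"

lemma eE_dim[simp]: "dim_vec (eE i) = n" and fF_dim[simp]: "dim_vec (fF i) = n"
  unfolding eE_def fF_def by auto

lemma eE_carrier[simp]: "eE i \<in> carrier_vec n" and fF_carrier[simp]: "fF i \<in> carrier_vec n"
  unfolding eE_def fF_def by auto

lemma eE_E: "i < a \<Longrightarrow> k < a \<Longrightarrow> eE i $ E k = (if k = i then 1 else 0)"
  unfolding eE_def using E_lt E_inj by auto
lemma eE_F: "i < a \<Longrightarrow> k < b \<Longrightarrow> eE i $ F k = 0"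
  unfolding eE_def using E_lt F_lt EF[of i k] by (auto simp: index_unit_vec)
lemma fF_F: "i < b \<Longrightarrow> k < b \<Longrightarrow> fF i $ F k = (if k = i then 1 else 0)"
  unfolding fF_def using F_lt F_inj by auto
lemma fF_E: "i < b \<Longrightarrow> k < a \<Longrightarrow> fF i $ E k = 0"
  unfolding fF_def using E_lt F_lt EF[of k i] by (auto simp: index_unit_vec)

lemma J_eE: "i < a \<Longrightarrow> J *\<^sub>v eE i = (if Suc i < a then eE (Suc i) else 0\<^sub>v n)"
  by (rule vec_ext, insert J, auto simp del: index_mult_mat_vec simp: JE JF eE_E eE_F E_lt F_lt)

lemma J_fF: "i < b \<Longrightarrow> J *\<^sub>v fF i = (if Suc i < b then fF (Suc i) else 0\<^sub>v n)"
  by (rule vec_ext, insert J, auto simp del: index_mult_mat_vec simp: JE JF fF_E fF_F E_lt F_lt)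

lemma MJ: "v \<in> carrier_vec n \<Longrightarrow> M *\<^sub>v (J *\<^sub>v v) = J *\<^sub>v (M *\<^sub>v v)"
  using assoc_mult_mat_vec[OF M J, of v] assoc_mult_mat_vec[OF J M, of v] comm by simp

definition "al k = (M *\<^sub>v eE 0) $ E k"
definition "be k = (M *\<^sub>v eE 0) $ F k"
definition "ga k = (M *\<^sub>v fF 0) $ E k"
definition "de k = (M *\<^sub>v fF 0) $ F k"

lemma MeE_aux:
  "i < a \<Longrightarrow> (\<forall>k<a. (M *\<^sub>v eE i) $ E k = (if i \<le> k then al (k - i) else 0))
    \<and> (\<forall>k<b. (M *\<^sub>v eE i) $ F k = (if i \<le> k then be (k - i) else 0))"
proof (induct i)
  case 0
  then show ?case by (simp add: al_def be_def)
next
  case (Suc i)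
  then have i: "i < a" "Suc i < a" by auto
  have eq: "M *\<^sub>v eE (Suc i) = J *\<^sub>v (M *\<^sub>v eE i)"
    using J_eE[OF i(1)] i MJ[of "eE i"] by auto
  have c: "M *\<^sub>v eE i \<in> carrier_vec n" using M by simp
  from Suc(1)[OF i(1)] show ?case unfolding eq using JE[OF c] JF[OF c] by auto
qed

lemma MeE:
  assumes "i < a"
  shows "k < a \<Longrightarrow> (M *\<^sub>v eE i) $ E k = (if i \<le> k then al (k - i) else 0)"
    "k < b \<Longrightarrow> (M *\<^sub>v eE i) $ F k = (if i \<le> k then be (k - i) else 0)"
  using MeE_aux[OF assms] by auto

lemma MfF_aux:
  "i < b \<Longrightarrow> (\<forall>k<a. (M *\<^sub>v fF i) $ E k = (if i \<le> k then ga (k - i) else 0))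
    \<and> (\<forall>k<b. (M *\<^sub>v fF i) $ F k = (if i \<le> k then de (k - i) else 0))"
proof (induct i)
  case 0
  then show ?case by (simp add: ga_def de_def)
next
  case (Suc i)
  then have i: "i < b" "Suc i < b" by auto
  have eq: "M *\<^sub>v fF (Suc i) = J *\<^sub>v (M *\<^sub>v fF i)"
    using J_fF[OF i(1)] i MJ[of "fF i"] by auto
  have c: "M *\<^sub>v fF i \<in> carrier_vec n" using M by simp
  from Suc(1)[OF i(1)] show ?case unfolding eq using JE[OF c] JF[OF c] by auto
qed

lemma MfF:
  assumes "i < b"
  shows "k < a \<Longrightarrow> (M *\<^sub>v fF i) $ E k = (if i \<le> k then ga (k - i) else 0)"
    "k < b \<Longrightarrow> (M *\<^sub>v fF i) $ F k = (if i \<le> k then de (k - i) else 0)"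
  using MfF_aux[OF assms] by auto

lemma Mv_E:
  assumes v: "v \<in> carrier_vec n" and k: "k < a"
  shows "(M *\<^sub>v v) $ E k = (\<Sum>i<a. (if i \<le> k then al (k - i) else 0) * v $ E i)
     + (\<Sum>i<b. (if i \<le> k then ga (k - i) else 0) * v $ F i)"
proof -
  have "(M *\<^sub>v v) $ E k = (\<Sum>r<n. M $$ (E k, r) * v $ r)"
    using M v E_lt[OF k] by (simp add: scalar_prod_def lessThan_atLeast0)
  also have "\<dots> = (\<Sum>i<a. M $$ (E k, E i) * v $ E i) + (\<Sum>i<b. M $$ (E k, F i) * v $ F i)"
    by (rule sum_split)
  also have "(\<Sum>i<a. M $$ (E k, E i) * v $ E i) = (\<Sum>i<a. (if i \<le> k then al (k - i) else 0) * v $ E i)"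
    by (rule sum.cong[OF refl], subst mat_entry_unit[OF M], insert E_lt k MeE, auto simp: eE_def[symmetric])
  also have "(\<Sum>i<b. M $$ (E k, F i) * v $ F i) = (\<Sum>i<b. (if i \<le> k then ga (k - i) else 0) * v $ F i)"
    by (rule sum.cong[OF refl], subst mat_entry_unit[OF M], insert E_lt F_lt k MfF, auto simp: fF_def[symmetric])
  finally show ?thesis .
qed

lemma Mv_F:
  assumes v: "v \<in> carrier_vec n" and k: "k < b"
  shows "(M *\<^sub>v v) $ F k = (\<Sum>i<a. (if i \<le> k then be (k - i) else 0) * v $ E i)
     + (\<Sum>i<b. (if i \<le> k then de (k - i) else 0) * v $ F i)"
proof -
  have "(M *\<^sub>v v) $ F k = (\<Sum>r<n. M $$ (F k, r) * v $ r)"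
    using M v F_lt[OF k] by (simp add: scalar_prod_def lessThan_atLeast0)
  also have "\<dots> = (\<Sum>i<a. M $$ (F k, E i) * v $ E i) + (\<Sum>i<b. M $$ (F k, F i) * v $ F i)"
    by (rule sum_split)
  also have "(\<Sum>i<a. M $$ (F k, E i) * v $ E i) = (\<Sum>i<a. (if i \<le> k then be (k - i) else 0) * v $ E i)"
    by (rule sum.cong[OF refl], subst mat_entry_unit[OF M], insert E_lt F_lt k MeE, auto simp: eE_def[symmetric])
  also have "(\<Sum>i<b. M $$ (F k, F i) * v $ F i) = (\<Sum>i<b. (if i \<le> k then de (k - i) else 0) * v $ F i)"
    by (rule sum.cong[OF refl], subst mat_entry_unit[OF M], insert F_lt k MfF, auto simp: fF_def[symmetric])
  finally show ?thesis .
qed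

end


lemma mult_mat_zero_vec[simp]: "A \<in> carrier_mat n m \<Longrightarrow> A *\<^sub>v 0\<^sub>v m = 0\<^sub>v n"
  by (intro eq_vecI) (auto simp: scalar_prod_def)

locale core3 = core2 +
  assumes b1: "b \<ge> 1" and s3: "a \<ge> b + 3"
  and nil: "M ^\<^sub>m (a - 1) = 0\<^sub>m n n" and kd: "kernel_dim M = 2"
begin

lemma ga_small: "j + b < a \<Longrightarrow> ga j = 0"
proof -
  assume jb: "j + b < a"
  have b': "b - 1 < b" using b1 by simp
  have Jf: "J *\<^sub>v fF (b - 1) = 0\<^sub>v n" using J_fF[OF b'] b1 by simp
  have "J *\<^sub>v (M *\<^sub>v fF (b - 1)) = 0\<^sub>v n" using MJ[of "fF (b - 1)"] Jf M by simp
  then have "(J *\<^sub>v (M *\<^sub>v fF (b - 1))) $ E (j + b) = 0" using E_lt[OF jb] by simp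
  moreover have "(J *\<^sub>v (M *\<^sub>v fF (b - 1))) $ E (j + b) = ga j"
    using JE[of "M *\<^sub>v fF (b - 1)" "j + b"] jb b1 MfF(1)[OF b', of "j + b - 1"] M by simp
  ultimately show "ga j = 0" by simp
qed

lemma Mpow_Suc:
  assumes v: "v \<in> carrier_vec n"
  shows "M ^\<^sub>m Suc m *\<^sub>v v = M ^\<^sub>m m *\<^sub>v (M *\<^sub>v v)"
    "M ^\<^sub>m Suc m *\<^sub>v v = M *\<^sub>v (M ^\<^sub>m m *\<^sub>v v)"
proof -
  show "M ^\<^sub>m Suc m *\<^sub>v v = M ^\<^sub>m m *\<^sub>v (M *\<^sub>v v)"
    using assoc_mult_mat_vec[OF pow_carrier_mat[OF M] M v] by simp
  show "M ^\<^sub>m Suc m *\<^sub>v v = M *\<^sub>v (M ^\<^sub>m m *\<^sub>v v)"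
    unfolding pow_mat_Suc_left[OF M] using assoc_mult_mat_vec[OF M pow_carrier_mat[OF M] v] by simp
qed

lemma a_pos: "0 < a" using s3 by simp

lemma row_E0: "v \<in> carrier_vec n \<Longrightarrow> (M *\<^sub>v v) $ E 0 = al 0 * v $ E 0"
proof -
  assume v: "v \<in> carrier_vec n"
  have "(\<Sum>i<a. (if i \<le> 0 then al (0 - i) else 0) * v $ E i) = al 0 * v $ E 0"
    by (subst sum_single[of _ 0], use a_pos in auto)
  moreover have "(\<Sum>i<b. (if i \<le> 0 then ga (0 - i) else 0) * v $ F i) = 0"
    by (rule sum.neutral, use ga_small[of 0] s3 in auto)
  ultimately show ?thesis using Mv_E[OF v a_pos] by simp
qed

lemma al0: "al 0 = 0"
proof -
  have "v \<in> carrier_vec n \<Longrightarrow> (M ^\<^sub>m m *\<^sub>v v) $ E 0 = al 0 ^ m * v $ E 0" for m v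
  proof (induct m arbitrary: v)
    case 0 then show ?case using M by simp
  next
    case (Suc m)
    show ?case unfolding Mpow_Suc(1)[OF Suc(2)] Suc(1)[of "M *\<^sub>v v", OF mult_mat_vec_carrier[OF M Suc(2)]]
      row_E0[OF Suc(2)] by simp
  qed
  from this[of "eE 0" "a - 1"] have X: "(M ^\<^sub>m (a - 1) *\<^sub>v eE 0) $ E 0 = al 0 ^ (a - 1) * eE 0 $ E 0"
    by simp
  have Z: "(M ^\<^sub>m (a - 1) *\<^sub>v eE 0) $ E 0 = 0" unfolding nil using E_lt[OF a_pos] by simp
  have "eE 0 $ E 0 = 1" using eE_E[OF a_pos a_pos] by simp
  with X Z have "al 0 ^ (a - 1) = 0" by (metis mult_1_right)
  then show ?thesis by (metis power_eq_0_iff)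
qed

lemma row_F0: "v \<in> carrier_vec n \<Longrightarrow> (M *\<^sub>v v) $ F 0 = be 0 * v $ E 0 + de 0 * v $ F 0"
proof -
  assume v: "v \<in> carrier_vec n"
  have b0: "0 < b" using b1 by simp
  have "(\<Sum>i<a. (if i \<le> 0 then be (0 - i) else 0) * v $ E i) = be 0 * v $ E 0"
    by (subst sum_single[of _ 0], use a_pos in auto)
  moreover have "(\<Sum>i<b. (if i \<le> 0 then de (0 - i) else 0) * v $ F i) = de 0 * v $ F 0"
    by (subst sum_single[of _ 0], use b0 in auto)
  ultimately show ?thesis using Mv_F[OF v b0] by simp
qed

lemma de0: "de 0 = 0"
proof -
  have b0: "0 < b" using b1 by simp
  have "v \<in> carrier_vec n \<Longrightarrow> v $ E 0 = 0 \<Longrightarrow> (M ^\<^sub>m m *\<^sub>v v) $ F 0 = de 0 ^ m * v $ F 0" for m v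
  proof (induct m arbitrary: v)
    case 0 then show ?case using M by simp
  next
    case (Suc m)
    have c: "M *\<^sub>v v \<in> carrier_vec n" using M Suc(2) by simp
    have z: "(M *\<^sub>v v) $ E 0 = 0" using row_E0[OF Suc(2)] al0 by simp
    show ?case unfolding Mpow_Suc(1)[OF Suc(2)] Suc(1)[OF c z] row_F0[OF Suc(2)] Suc(3) by simp
  qed
  from this[of "fF 0" "a - 1"] have X: "(M ^\<^sub>m (a - 1) *\<^sub>v fF 0) $ F 0 = de 0 ^ (a - 1) * fF 0 $ F 0"
    using fF_E[OF b0 a_pos] by simp
  have Z: "(M ^\<^sub>m (a - 1) *\<^sub>v fF 0) $ F 0 = 0" unfolding nil using F_lt[OF b0] by simp
  have "fF 0 $ F 0 = 1" using fF_F[OF b0 b0] by simp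
  with X Z have "de 0 ^ (a - 1) = 0" by (metis mult_1_right)
  then show ?thesis by (metis power_eq_0_iff)
qed

definition "Inv j v \<longleftrightarrow> v $ E j = al 1 ^ j \<and> (\<forall>i<j. v $ E i = 0) \<and> (\<forall>i<b. Suc i < j \<longrightarrow> v $ F i = 0)"

lemma inv_step:
  assumes v: "v \<in> carrier_vec n" and j: "Suc j < a" and I: "Inv j v"
  shows "Inv (Suc j) (M *\<^sub>v v)"
proof -
  from I have vj: "v $ E j = al 1 ^ j" and vE: "\<And>i. i < j \<Longrightarrow> v $ E i = 0"
    and vF: "\<And>i. i < b \<Longrightarrow> Suc i < j \<Longrightarrow> v $ F i = 0" unfolding Inv_def by auto
  have Ek: "(M *\<^sub>v v) $ E k = (if k = Suc j then al 1 ^ Suc j else 0)" if k: "k \<le> Suc j" for k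
  proof -
    have ka: "k < a" using k j by simp
    have S2: "(\<Sum>i<b. (if i \<le> k then ga (k - i) else 0) * v $ F i) = 0"
    proof (rule sum.neutral, intro ballI)
      fix i assume i: "i \<in> {..<b}"
      show "(if i \<le> k then ga (k - i) else 0) * v $ F i = 0"
      proof (cases "i \<le> k \<and> k - i + b < a")
        case True
        have "ga (k - i) = 0" by (rule ga_small, use True in arith)
        then show ?thesis by simp
      next
        case False
        show ?thesis
        proof (cases "i \<le> k")
          case True
          with False k s3 have "Suc i < j" by arith
          then show ?thesis using vF[of i] i by simp
        qed simp
      qed
    qed
    have S1: "(\<Sum>i<a. (if i \<le> k then al (k - i) else 0) * v $ E i) = (if k = Suc j then al 1 ^ Suc j else 0)"
    proof (cases "k = Suc j")
      case True
      have "(\<Sum>i<a. (if i \<le> k then al (k - i) else 0) * v $ E i) = (if j \<le> k then al (k - j) else 0) * v $ E j"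
      proof (rule sum_single)
        fix i assume "i \<in> {..<a}" "i \<noteq> j"
        then show "(if i \<le> k then al (k - i) else 0) * v $ E i = 0"
          using vE[of i] al0 True by (cases "i < j") (auto simp: le_Suc_eq)
      qed (use j in auto)
      then show ?thesis using True vj by simp
    next
      case False
      show ?thesis
      proof (rule sum.neutral[THEN trans], intro ballI)
        fix i assume "i \<in> {..<a}"
        show "(if i \<le> k then al (k - i) else 0) * v $ E i = 0"
          using vE[of i] al0 False k by (cases "i < j") auto
      qed (use False in simp)
    qed
    show ?thesis using Mv_E[OF v ka] S1 S2 by simp
  qed
  have Fk: "(M *\<^sub>v v) $ F k = 0" if k: "k < b" "Suc k < Suc j" for k
  proof -
    have "(\<Sum>i<a. (if i \<le> k then be (k - i) else 0) * v $ E i) = 0"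
      by (rule sum.neutral, use vE k in auto)
    moreover have "(\<Sum>i<b. (if i \<le> k then de (k - i) else 0) * v $ F i) = 0"
    proof (rule sum.neutral, intro ballI)
      fix i assume i: "i \<in> {..<b}"
      show "(if i \<le> k then de (k - i) else 0) * v $ F i = 0"
        using vF[of i] de0 i k by (cases "i = k") auto
    qed
    ultimately show ?thesis using Mv_F[OF v k(1)] by simp
  qed
  show ?thesis unfolding Inv_def using Ek Fk by auto
qed

lemma al1: "al 1 = 0"
proof -
  have "j < a \<Longrightarrow> Inv j (M ^\<^sub>m j *\<^sub>v eE 0)" for j
  proof (induct j)
    case 0 then show ?case unfolding Inv_def using eE_E[OF a_pos a_pos] M by simp
  next
    case (Suc j)
    show ?case unfolding Mpow_Suc(2)[OF eE_carrier]
      by (rule inv_step[OF _ Suc(2) Suc(1)], use M Suc(2) mult_mat_vec_carrier[OF pow_carrier_mat[OF M] eE_carrier] in auto)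
  qed
  from this[of "a - 1"] a_pos have "(M ^\<^sub>m (a - 1) *\<^sub>v eE 0) $ E (a - 1) = al 1 ^ (a - 1)"
    unfolding Inv_def by simp
  moreover have "(M ^\<^sub>m (a - 1) *\<^sub>v eE 0) $ E (a - 1) = 0" unfolding nil using E_lt a_pos by simp
  ultimately show ?thesis using s3 by simp
qed


lemma am: "a - 1 < a" "a - 2 < a" "a - 3 < a" "b - 1 < b" using s3 b1 by auto

lemma K1: "M *\<^sub>v eE (a - 1) = 0\<^sub>v n"
proof (rule vec_ext)
  fix k assume k: "k < a"
  show "(M *\<^sub>v eE (a - 1)) $ E k = 0\<^sub>v n $ E k"
    unfolding MeE(1)[OF am(1) k] using k E_lt[OF k] al0 a_pos by auto
next
  fix k assume k: "k < b"
  show "(M *\<^sub>v eE (a - 1)) $ F k = 0\<^sub>v n $ F k"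
    unfolding MeE(2)[OF am(1) k] using k F_lt[OF k] s3 by auto
qed (use M in auto)

lemma K2: "M *\<^sub>v eE (a - 2) = 0\<^sub>v n"
proof (rule vec_ext)
  fix k assume k: "k < a"
  show "(M *\<^sub>v eE (a - 2)) $ E k = 0\<^sub>v n $ E k"
  proof (cases "a - 2 \<le> k")
    case True
    then have "k - (a - 2) = 0 \<or> k - (a - 2) = 1" using k by arith
    then show ?thesis unfolding MeE(1)[OF am(2) k] using k E_lt[OF k] al0 al1 a_pos True by auto
  qed (unfold MeE(1)[OF am(2) k], use k E_lt[OF k] in auto)
next
  fix k assume k: "k < b"
  show "(M *\<^sub>v eE (a - 2)) $ F k = 0\<^sub>v n $ F k"
    unfolding MeE(2)[OF am(2) k] using k F_lt[OF k] s3 by auto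
qed (use M in auto)

lemma K3: "M *\<^sub>v eE (a - 3) = al 2 \<cdot>\<^sub>v eE (a - 1)"
proof (rule vec_ext)
  fix k assume k: "k < a"
  have r: "(al 2 \<cdot>\<^sub>v eE (a - 1)) $ E k = (if k = a - 1 then al 2 else 0)"
  proof -
    have x: "eE (a - 1) $ E k = (if k = a - 1 then 1 else 0)" by (rule eE_E[OF am(1) k])
    have "(al 2 \<cdot>\<^sub>v eE (a - 1)) $ E k = al 2 * eE (a - 1) $ E k" using E_lt[OF k] by simp
    then show ?thesis unfolding x by simp
  qed
  show "(M *\<^sub>v eE (a - 3)) $ E k = (al 2 \<cdot>\<^sub>v eE (a - 1)) $ E k"
  proof (cases "a - 3 \<le> k")
    case True
    then have "k - (a - 3) = 0 \<and> k \<noteq> a - 1 \<or> k - (a - 3) = 1 \<and> k \<noteq> a - 1 \<or> k - (a - 3) = 2 \<and> k = a - 1"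
      using k s3 by arith
    then show ?thesis unfolding MeE(1)[OF am(3) k] r using k al0 al1 s3 True by auto
  next
    case False
    then have "k \<noteq> a - 1" using s3 by arith
    then show ?thesis unfolding MeE(1)[OF am(3) k] r using k False s3 by auto
  qed
next
  fix k assume k: "k < b"
  show "(M *\<^sub>v eE (a - 3)) $ F k = (al 2 \<cdot>\<^sub>v eE (a - 1)) $ F k"
    unfolding MeE(2)[OF am(3) k] using k F_lt[OF k] s3 eE_F[of "a - 1" k] by auto
qed (use M in auto)

lemma K4: "M *\<^sub>v fF (b - 1) = ga (a - b) \<cdot>\<^sub>v eE (a - 1)"
proof (rule vec_ext)
  have b': "b - 1 < b" using b1 by simp
  fix k assume k: "k < a"
  have r: "(ga (a - b) \<cdot>\<^sub>v eE (a - 1)) $ E k = (if k = a - 1 then ga (a - b) else 0)"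
  proof -
    have x: "eE (a - 1) $ E k = (if k = a - 1 then 1 else 0)" by (rule eE_E[OF am(1) k])
    have "(ga (a - b) \<cdot>\<^sub>v eE (a - 1)) $ E k = ga (a - b) * eE (a - 1) $ E k" using E_lt[OF k] by simp
    then show ?thesis unfolding x by simp
  qed
  show "(M *\<^sub>v fF (b - 1)) $ E k = (ga (a - b) \<cdot>\<^sub>v eE (a - 1)) $ E k"
  proof (cases "k = a - 1")
    case True
    then show ?thesis unfolding MfF(1)[OF b' k] r using s3 b1 by (simp add: Suc_diff_le)
  next
    case False
    show ?thesis
    proof (cases "b - 1 \<le> k")
      case True
      have "ga (k - (b - 1)) = 0" by (rule ga_small, use True False k b1 in arith)
      then show ?thesis unfolding MfF(1)[OF b' k] r using False by simp
    qed (unfold MfF(1)[OF b' k] r, use False in simp)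
  qed
next
  have b': "b - 1 < b" using b1 by simp
  fix k assume k: "k < b"
  show "(M *\<^sub>v fF (b - 1)) $ F k = (ga (a - b) \<cdot>\<^sub>v eE (a - 1)) $ F k"
    unfolding MfF(2)[OF b' k] using k F_lt[OF k] s3 eE_F[of "a - 1" k] de0 by auto
qed (use M in auto)

definition "w3 = (if al 2 = 0 then eE (a - 3) else ga (a - b) \<cdot>\<^sub>v eE (a - 3) - al 2 \<cdot>\<^sub>v fF (b - 1))"

lemma w3_carrier: "w3 \<in> carrier_vec n" unfolding w3_def by auto

lemma K5: "M *\<^sub>v w3 = 0\<^sub>v n"
proof (cases "al 2 = 0")
  case True
  then show ?thesis unfolding w3_def using K3 by (intro eq_vecI, auto)
next
  case False
  have "M *\<^sub>v w3 = M *\<^sub>v (ga (a - b) \<cdot>\<^sub>v eE (a - 3)) - M *\<^sub>v (al 2 \<cdot>\<^sub>v fF (b - 1))"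
    unfolding w3_def using False by (simp add: mult_minus_distrib_mat_vec[OF M])
  also have "\<dots> = ga (a - b) \<cdot>\<^sub>v (al 2 \<cdot>\<^sub>v eE (a - 1)) - al 2 \<cdot>\<^sub>v (ga (a - b) \<cdot>\<^sub>v eE (a - 1))"
    unfolding mult_mat_vec[OF M eE_carrier] mult_mat_vec[OF M fF_carrier] K3 K4 ..
  also have "\<dots> = 0\<^sub>v n" by (rule eq_vecI, auto)
  finally show ?thesis .
qed

lemma contradiction: False
proof -
  interpret K: kernel n n M by (unfold_locales, rule M)
  have a1: "a - 1 < a" "a - 2 < a" "a - 3 < a" using s3 by auto
  have b': "b - 1 < b" using b1 by simp
  have ne: "a - 1 \<noteq> a - 2" "a - 1 \<noteq> a - 3" "a - 2 \<noteq> a - 3" using s3 by auto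
  have c1: "eE (a - 1) $ E (a - 1) = 1" "eE (a - 1) $ E (a - 2) = 0" "eE (a - 1) $ E (a - 3) = 0"
    "eE (a - 1) $ F (b - 1) = 0"
    using eE_E[OF a1(1) a1(1)] eE_E[OF a1(1) a1(2)] eE_E[OF a1(1) a1(3)] eE_F[OF a1(1) b'] ne by auto
  have c2: "eE (a - 2) $ E (a - 1) = 0" "eE (a - 2) $ E (a - 2) = 1" "eE (a - 2) $ E (a - 3) = 0"
    "eE (a - 2) $ F (b - 1) = 0"
    using eE_E[OF a1(2) a1(1)] eE_E[OF a1(2) a1(2)] eE_E[OF a1(2) a1(3)] eE_F[OF a1(2) b'] ne by auto
  have c3a: "eE (a - 3) $ E (a - 1) = 0" "eE (a - 3) $ E (a - 2) = 0" "eE (a - 3) $ E (a - 3) = 1"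
     "eE (a - 3) $ F (b - 1) = 0"
    using eE_E[OF a1(3) a1(1)] eE_E[OF a1(3) a1(2)] eE_E[OF a1(3) a1(3)] eE_F[OF a1(3) b'] ne by auto
  have c3b: "fF (b - 1) $ E (a - 1) = 0" "fF (b - 1) $ E (a - 2) = 0" "fF (b - 1) $ F (b - 1) = 1"
    using fF_E[OF b' a1(1)] fF_E[OF b' a1(2)] fF_F[OF b' b'] by auto
  have lt: "E (a - 1) < n" "E (a - 2) < n" "E (a - 3) < n" "F (b - 1) < n"
    using E_lt[OF a1(1)] E_lt[OF a1(2)] E_lt[OF a1(3)] F_lt[OF b'] by auto
  have w3E: "w3 $ i = (if al 2 = 0 then eE (a - 3) $ i else ga (a - b) * eE (a - 3) $ i - al 2 * fF (b - 1) $ i)"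
    if "i < n" for i using that unfolding w3_def by simp
  have c3: "w3 $ E (a - 1) = 0" "w3 $ E (a - 2) = 0"
    "al 2 = 0 \<Longrightarrow> w3 $ E (a - 3) = 1" "al 2 \<noteq> 0 \<Longrightarrow> w3 $ F (b - 1) = - al 2"
    unfolding w3E[OF lt(1)] w3E[OF lt(2)] w3E[OF lt(3)] w3E[OF lt(4)] c3a c3b by auto
  have d: "eE (a - 1) \<noteq> eE (a - 2)" "w3 \<noteq> eE (a - 1)" "w3 \<noteq> eE (a - 2)"
    using c1 c2 c3 by (metis zero_neq_one)+
  let ?S = "{eE (a - 1), eE (a - 2), w3}"
  have S: "?S \<subseteq> mat_kernel M"
    using K1 K2 K5 w3_carrier by (auto intro!: mat_kernelI[OF M])
  have "card ?S \<le> kernel_dim M"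
  proof (rule K.card_le_kernel_dim[OF S])
    fix v assume v: "v \<in> ?S"
    show "\<exists>i<n. v $ i \<noteq> 0 \<and> (\<forall>w\<in>?S. w \<noteq> v \<longrightarrow> w $ i = 0)"
    proof -
      { assume "v = eE (a - 1)"
        then have ?thesis using c1 c2 c3 d E_lt[OF a1(1)] by (intro exI[of _ "E (a - 1)"]) auto }
      moreover
      { assume "v = eE (a - 2)"
        then have ?thesis using c1 c2 c3 d E_lt[OF a1(2)] by (intro exI[of _ "E (a - 2)"]) auto }
      moreover
      { assume v3: "v = w3" "al 2 = 0"
        then have ?thesis using c1 c2 c3 d E_lt[OF a1(3)] by (intro exI[of _ "E (a - 3)"]) auto }
      moreover
      { assume v3: "v = w3" "al 2 \<noteq> 0"
        then have ?thesis using c1 c2 c3 d F_lt[OF b'] by (intro exI[of _ "F (b - 1)"]) auto }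
      ultimately show ?thesis using v by blast
    qed
  qed
  moreover have "card ?S = 3" using d by auto
  ultimately show False using kd by simp
qed

end


lemma core_jm:
  fixes M :: "'a :: field mat"
  assumes pq: "(p = a \<and> q = b) \<or> (p = b \<and> q = a)"
    and n: "n = a + b" and M: "M \<in> carrier_mat n n"
    and comm: "M * jordan_matrix [(p,0),(q,0)] = jordan_matrix [(p,0),(q,0)] * M"
    and b1: "b \<ge> 1" and s3: "a \<ge> b + 3"
    and nil: "M ^\<^sub>m (a - 1) = 0\<^sub>m n n" and kd: "kernel_dim M = 2"
  shows False
proof -
  let ?J = "jordan_matrix [(p,0::'a),(q,0)]"
  have pqn: "p + q = n" using pq n by auto
  have J: "?J \<in> carrier_mat n n" using jordan_matrix_carrier[of "[(p,0::'a),(q,0)]"] pqn by simp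
  have Jm: "w \<in> carrier_vec n \<Longrightarrow> i < n \<Longrightarrow> (?J *\<^sub>v w) $ i = (if Suc i < n \<and> Suc i \<noteq> p then w $ Suc i else 0)" for w i
    using jm2_mult[of w p q i "0::'a" 0] pqn by simp
  from pq show False
  proof
    assume pq1: "p = a \<and> q = b"
    interpret core3 n a b "\<lambda>i. a - 1 - i" "\<lambda>i. a + b - 1 - i" ?J M
    proof (unfold_locales)
      fix w :: "'a vec" and k assume w: "w \<in> carrier_vec n" and k: "k < a"
      show "(?J *\<^sub>v w) $ (a - 1 - k) = (if k = 0 then 0 else w $ (a - 1 - (k - 1)))"
      proof -
        have idx: "0 < k \<Longrightarrow> Suc (a - 1 - k) = a - 1 - (k - 1)" using k by arith
        show ?thesis using Jm[OF w, of "a - 1 - k"] k n pq1 idx by (cases k) auto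
      qed
    next
      fix w :: "'a vec" and k assume w: "w \<in> carrier_vec n" and k: "k < b"
      show "(?J *\<^sub>v w) $ (a + b - 1 - k) = (if k = 0 then 0 else w $ (a + b - 1 - (k - 1)))"
      proof -
        have idx: "0 < k \<Longrightarrow> Suc (a + b - 1 - k) = a + b - 1 - (k - 1)" using k n b1 by arith
        show ?thesis using Jm[OF w, of "a + b - 1 - k"] k n pq1 b1 idx by (cases k) auto
      qed
    qed (use n J M comm b1 s3 nil kd in auto)
    show False by (rule contradiction)
  next
    assume pq2: "p = b \<and> q = a"
    interpret core3 n a b "\<lambda>i. a + b - 1 - i" "\<lambda>i. b - 1 - i" ?J M
    proof (unfold_locales)
      fix w :: "'a vec" and k assume w: "w \<in> carrier_vec n" and k: "k < a"
      show "(?J *\<^sub>v w) $ (a + b - 1 - k) = (if k = 0 then 0 else w $ (a + b - 1 - (k - 1)))"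
      proof -
        have idx: "0 < k \<Longrightarrow> Suc (a + b - 1 - k) = a + b - 1 - (k - 1)" using k n b1 by arith
        show ?thesis using Jm[OF w, of "a + b - 1 - k"] k n pq2 b1 idx by (cases k) auto
      qed
    next
      fix w :: "'a vec" and k assume w: "w \<in> carrier_vec n" and k: "k < b"
      show "(?J *\<^sub>v w) $ (b - 1 - k) = (if k = 0 then 0 else w $ (b - 1 - (k - 1)))"
      proof -
        have idx: "0 < k \<Longrightarrow> Suc (b - 1 - k) = b - 1 - (k - 1)" using k n b1 by arith
        show ?thesis using Jm[OF w, of "b - 1 - k"] k n pq2 b1 idx by (cases k) auto
      qed
    qed (use n J M comm b1 s3 nil kd in auto)
    show False by (rule contradiction)
  qed
qed


lemma mult_vec_assoc_n:
  fixes X Y :: "'a :: field mat"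
  shows "X \<in> carrier_mat n n \<Longrightarrow> Y \<in> carrier_mat n n \<Longrightarrow> v \<in> carrier_vec n \<Longrightarrow> (X * Y) *\<^sub>v v = X *\<^sub>v (Y *\<^sub>v v)"
  by (rule assoc_mult_mat_vec)

lemma forward:
  fixes A B :: "'a :: field mat"
  assumes nB: "nilpotent_mat n B" and nA: "nilpotent_mat n A" and comm: "B * A = A * B"
    and sB: "has_shape B {#a, b#}" and sA: "has_shape A {#c, d#}"
    and ab: "a \<ge> b" "b \<ge> 1" and cd: "c \<ge> d" "d \<ge> 1" and n: "a + b = n" "c + d = n" and ca: "c < a"
  shows "a = b + 2 \<and> c = d"
proof -
  have ab2: "a \<ge> b + 2" using ab cd n ca by arith
  have "\<not> a \<ge> b + 3"
  proof
    assume s3: "a \<ge> b + 3"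
    obtain p q P Q where wit: "similar_mat_wit B (jordan_matrix [(p,0),(q,0)]) P Q"
      and pq: "(p = a \<and> q = b) \<or> (p = b \<and> q = a)"
      by (rule shape2[OF nB sB], use ab in auto)
    let ?J = "jordan_matrix [(p,0::'a),(q,0)]"
    from nB have B: "B \<in> carrier_mat n n" unfolding nilpotent_mat_def by auto
    from nA have A: "A \<in> carrier_mat n n" unfolding nilpotent_mat_def by auto
    have J: "?J \<in> carrier_mat n n" and P: "P \<in> carrier_mat n n" and Q: "Q \<in> carrier_mat n n"
      by (rule similar_mat_witD2[OF B wit])+
    have PQ: "P * Q = 1\<^sub>m n" and QP: "Q * P = 1\<^sub>m n" by (rule similar_mat_witD2[OF B wit])+
    have Jeq: "?J = Q * B * P" by (rule similar_mat_witD2(3)[OF J similar_mat_wit_sym[OF wit]])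
    define M where "M = Q * A * P"
    have M: "M \<in> carrier_mat n n" unfolding M_def using Q A P by auto
    have witM: "similar_mat_wit M A Q P"
      unfolding similar_mat_wit_def Let_def M_def using Q A P PQ QP by auto
    have nilA: "A ^\<^sub>m (a - 1) = 0\<^sub>m n n" by (rule shape2_facts(2)[OF nA sA], use ca cd in auto)
    have nilM: "M ^\<^sub>m (a - 1) = 0\<^sub>m n n"
      unfolding similar_mat_wit_pow_id[OF witM] nilA using Q P by simp
    have kdA: "kernel_dim A = 2" by (rule shape2_facts(1)[OF nA sA _ cd(2)], use cd in auto)
    have kdM: "kernel_dim M = 2"
      using kdA similar_mat_wit_kernel_dim[OF M witM] M A unfolding kernel_dim_def by simp
    have PQv: "P *\<^sub>v (Q *\<^sub>v v) = v" if "v \<in> carrier_vec n" for v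
      using mult_vec_assoc_n[OF P Q that] PQ that by simp
    have ABv: "A *\<^sub>v (B *\<^sub>v v) = B *\<^sub>v (A *\<^sub>v v)" if "v \<in> carrier_vec n" for v
      using mult_vec_assoc_n[OF A B that] mult_vec_assoc_n[OF B A that] comm by simp
    have commM: "M * ?J = ?J * M"
    proof (rule mat_eq_by_vec)
      show "M * ?J \<in> carrier_mat n n" "?J * M \<in> carrier_mat n n" using M J by auto
      fix w :: "'a vec" assume w: "w \<in> carrier_vec n"
      have "(M * ?J) *\<^sub>v w = Q *\<^sub>v (A *\<^sub>v (P *\<^sub>v (Q *\<^sub>v (B *\<^sub>v (P *\<^sub>v w)))))"
        unfolding Jeq M_def using Q A P B w
        by (simp add: mult_vec_assoc_n[of _ n] del: assoc_mult_mat_vec)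
      also have "\<dots> = Q *\<^sub>v (B *\<^sub>v (A *\<^sub>v (P *\<^sub>v w)))"
        using PQv ABv P B w A by simp
      also have "\<dots> = (?J * M) *\<^sub>v w"
        unfolding Jeq M_def using Q A P B w PQv
        by (simp add: mult_vec_assoc_n[of _ n] del: assoc_mult_mat_vec)
      finally show "(M * ?J) *\<^sub>v w = (?J * M) *\<^sub>v w" .
    qed
    show False by (rule core_jm[OF pq n(1)[symmetric] M commM ab(2) s3 nilM kdM])
  qed
  with ab2 have "a = b + 2" by simp
  then show ?thesis using n cd ca by arith
qed


lemma mat_mult_vec_index:
  fixes f :: "nat \<times> nat \<Rightarrow> 'a :: field"
  assumes "i < n" "w \<in> carrier_vec m"
  shows "(mat n m f *\<^sub>v w) $ i = (\<Sum>j<m. f (i, j) * w $ j)"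
  using assms by (simp add: scalar_prod_def lessThan_atLeast0 row_def)

lemma aux_div:
  fixes x y c1 c2 d :: "'a :: field"
  shows "(x + c1 * y) / d + (- x + c2 * y) / d = (c1 + c2) * y / d"
proof -
  have "(x + c1 * y) + (- x + c2 * y) = (c1 + c2) * y" by (simp add: algebra_simps)
  then show ?thesis by (metis add_divide_distrib)
qed

lemma sum2:
  fixes x1 x2 :: "'a :: field"
  assumes "t1 < m" "t2 < m"
  shows "(\<Sum>j<m. ((if j = t1 then x1 else 0) + (if j = t2 then x2 else 0)) * w $ j) = x1 * w $ t1 + x2 * w $ t2"
  using assms by (simp add: distrib_right sum.distrib if_distrib[of "\<lambda>x. x * _"] sum.delta cong: if_cong)

context
  fixes k :: nat and n :: nat
  assumes k2: "k \<ge> 2" and n: "n = 2 * k"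
begin

definition Pm :: "'a :: field_char_0 mat" where
  "Pm = mat n n (\<lambda>(r,c). if r < k then (if c = r then of_nat (k - r) else 0) + (if c = k + r then - of_nat r else 0)
     else (if c = r - k + 1 then 1 else 0) + (if c = r + 1 then (if r + 2 \<le> n then 1 else 0) else 0))"

definition Qm :: "'a :: field_char_0 mat" where
  "Qm = mat n n (\<lambda>(r,c). if r < k then (if c = r then 1 / of_nat k else 0)
        + (if c = k + r - 1 then (if 1 \<le> r then of_nat r / of_nat k else 0) else 0)
     else if r = k then (if c = n - 1 then 1 else 0)
     else (if c = r - k then - 1 / of_nat k else 0) + (if c = r - 1 then of_nat (n - r) / of_nat k else 0))"

definition Nm :: "'a :: field_char_0 mat" where
  "Nm = mat n n (\<lambda>(r,c). if c = r + k then (if r < k then 1 else 0) else 0)"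

lemma Pv: assumes w: "w \<in> carrier_vec n" and r: "r < n"
  shows "(Pm *\<^sub>v w) $ r = (if r < k then of_nat (k - r) * w $ r - of_nat r * w $ (k + r)
     else w $ (r - k + 1) + (if r + 2 \<le> n then w $ (r + 1) else 0))"
  unfolding Pm_def mat_mult_vec_index[OF r w]
  using r n k2 by (simp add: distrib_right sum.distrib if_distrib[of "\<lambda>x. x * _"] sum.delta cong: if_cong) arith


lemma Qv: assumes w: "w \<in> carrier_vec n" and r: "r < n"
  shows "(Qm *\<^sub>v w) $ r = (if r < k then (w $ r + (if 1 \<le> r then of_nat r * w $ (k + r - 1) else 0)) / of_nat k
     else if r = k then w $ (n - 1)
     else (- w $ (r - k) + of_nat (n - r) * w $ (r - 1)) / of_nat k)"
proof -
  have e: "(Qm *\<^sub>v w) $ r = (\<Sum>j<n. (if r < k then (if j = r then 1 / of_nat k else 0)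
        + (if j = k + r - 1 then (if 1 \<le> r then of_nat r / of_nat k else 0) else 0)
     else if r = k then (if j = n - 1 then 1 else 0)
     else (if j = r - k then - 1 / of_nat k else 0) + (if j = r - 1 then of_nat (n - r) / of_nat k else 0)) * w $ j)"
    unfolding Qm_def mat_mult_vec_index[OF r w] by (simp only: prod.case)
  show ?thesis
  proof (cases "r < k")
    case True
    have "(Qm *\<^sub>v w) $ r = (\<Sum>j<n. ((if j = r then 1 / of_nat k else 0)
        + (if j = k + r - 1 then (if 1 \<le> r then of_nat r / of_nat k else 0) else 0)) * w $ j)"
      unfolding e if_P[OF True] ..
    also have "\<dots> = 1 / of_nat k * w $ r + (if 1 \<le> r then of_nat r / of_nat k else 0) * w $ (k + r - 1)"
      by (rule sum2, use True n k2 in auto)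
    finally show ?thesis using True by (simp add: add_divide_distrib)
  next
    case False
    show ?thesis
    proof (cases "r = k")
      case True
      have "(Qm *\<^sub>v w) $ r = (\<Sum>j<n. ((if j = n - 1 then 1 else 0) + (if j = n - 1 then 0 else 0)) * w $ j)"
        unfolding e if_not_P[OF False] if_P[OF True] by simp
      also have "\<dots> = 1 * w $ (n - 1) + 0 * w $ (n - 1)"
        by (rule sum2, use n k2 in auto)
      finally show ?thesis using True by simp
    next
      case F2: False
      have "(Qm *\<^sub>v w) $ r = (\<Sum>j<n. ((if j = r - k then - 1 / of_nat k else 0)
          + (if j = r - 1 then of_nat (n - r) / of_nat k else 0)) * w $ j)"
        unfolding e if_not_P[OF False] if_not_P[OF F2] ..
      also have "\<dots> = - 1 / of_nat k * w $ (r - k) + of_nat (n - r) / of_nat k * w $ (r - 1)"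
        by (rule sum2, use r n k2 in auto)
      finally show ?thesis using False F2 by (simp add: add_divide_distrib diff_divide_distrib)
    qed
  qed
qed

lemma Nv: assumes w: "w \<in> carrier_vec n" and r: "r < n"
  shows "(Nm *\<^sub>v w) $ r = (if r < k then w $ (r + k) else 0)"
  unfolding Nm_def mat_mult_vec_index[OF r w]
  using r n k2 by (simp add: if_distrib[of "\<lambda>x. x * _"] sum.delta cong: if_cong)


lemma nk: "n = k + k" using n by simp

lemma k0: "(of_nat k :: 'a :: field_char_0) \<noteq> 0" using k2 by simp

abbreviation "Bm \<equiv> jordan_matrix [(k, 0 :: 'a :: field_char_0), (k, 0)]"
abbreviation "Jm \<equiv> jordan_matrix [(k + 1, 0 :: 'a :: field_char_0), (k - 1, 0)]"

lemma Bm_carrier: "Bm \<in> carrier_mat n n" using jordan_matrix_carrier[of "[(k, 0 :: 'a), (k, 0)]"] nk by simp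
lemma Jm_carrier: "Jm \<in> carrier_mat n n" using jordan_matrix_carrier[of "[(k + 1, 0 :: 'a), (k - 1, 0)]"] nk k2 by simp
lemma Pm_carrier: "Pm \<in> carrier_mat n n" unfolding Pm_def by simp
lemma Qm_carrier: "Qm \<in> carrier_mat n n" unfolding Qm_def by simp
lemma Nm_carrier: "Nm \<in> carrier_mat n n" unfolding Nm_def by simp

lemma Bv: assumes w: "w \<in> carrier_vec n" and r: "r < n"
  shows "(Bm *\<^sub>v w) $ r = (if Suc r < n \<and> Suc r \<noteq> k then w $ Suc r else 0)"
  using jm2_mult[of w k k r "0::'a" 0] w r nk by simp

lemma Jv: assumes w: "w \<in> carrier_vec n" and r: "r < n"
  shows "(Jm *\<^sub>v w) $ r = (if Suc r < n \<and> Suc r \<noteq> k + 1 then w $ Suc r else 0)"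
proof -
  have e: "k + 1 + (k - 1) = n" using nk k2 by simp
  show ?thesis using jm2_mult[of w "k + 1" "k - 1" r "0::'a" 0] w r unfolding e by simp
qed

lemma PQ: "Pm * Qm = (1\<^sub>m n :: 'a :: field_char_0 mat)"
proof (rule mat_eq_by_vec)
  show "Pm * Qm \<in> carrier_mat n n" "(1\<^sub>m n :: 'a mat) \<in> carrier_mat n n"
    using mult_carrier_mat[OF Pm_carrier Qm_carrier] by auto
  fix w :: "'a vec" assume w: "w \<in> carrier_vec n"
  have Qw: "Qm *\<^sub>v w \<in> carrier_vec n" by (rule mult_mat_vec_carrier[OF Qm_carrier w])
  have "Pm *\<^sub>v (Qm *\<^sub>v w) = w"
  proof (rule eq_vecI)
    fix r assume "r < dim_vec w" then have r: "r < n" using w by simp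
    note P = Pv[OF Qw r]
    show "(Pm *\<^sub>v (Qm *\<^sub>v w)) $ r = w $ r"
    proof (cases "r < k")
      case True
      show ?thesis
      proof (cases "r = 0")
        case r0: True
        have "(Qm *\<^sub>v w) $ 0 = w $ 0 / of_nat k" using Qv[OF w, of 0] n k2 by simp
        then show ?thesis unfolding P using True r0 k0 by simp
      next
        case False
        have q1: "(Qm *\<^sub>v w) $ r = (w $ r + of_nat r * w $ (k + r - 1)) / of_nat k"
          using Qv[OF w r] True False by simp
        have q2: "(Qm *\<^sub>v w) $ (k + r) = (- w $ r + of_nat (k - r) * w $ (k + r - 1)) / of_nat k"
          using Qv[OF w, of "k + r"] True False n by simp
        have kr: "(of_nat (k - r) :: 'a) = of_nat k - of_nat r" using True by (simp add: of_nat_diff)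
        have "(Pm *\<^sub>v (Qm *\<^sub>v w)) $ r = of_nat (k - r) * (Qm *\<^sub>v w) $ r - of_nat r * (Qm *\<^sub>v w) $ (k + r)"
          using P True by simp
        also have "\<dots> = (of_nat k - of_nat r) * ((w $ r + of_nat r * w $ (k + r - 1)) / of_nat k)
            - of_nat r * ((- w $ r + (of_nat k - of_nat r) * w $ (k + r - 1)) / of_nat k)"
          unfolding q1 q2 kr ..
        also have "\<dots> = (of_nat k * w $ r) / of_nat k"
          by (simp add: field_simps)
        also have "\<dots> = w $ r" using k0 by simp
        finally show ?thesis .
      qed
    next
      case False
      show ?thesis
      proof (cases "r + 2 \<le> n")
        case True
        have q1: "(Qm *\<^sub>v w) $ (r - k + 1) = (w $ (r - k + 1) + of_nat (r - k + 1) * w $ r) / of_nat k"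
        proof -
          have l: "r - k + 1 < k" "1 \<le> r - k + 1" "k + (r - k + 1) - 1 = r" "r - k + 1 < n"
            using True False n by arith+
          show ?thesis using Qv[OF w l(4)] l by simp
        qed
        have q2: "(Qm *\<^sub>v w) $ (r + 1) = (- w $ (r - k + 1) + of_nat (n - (r + 1)) * w $ r) / of_nat k"
        proof -
          have l: "\<not> r + 1 < k" "r + 1 \<noteq> k" "r + 1 - k = r - k + 1" "r + 1 - 1 = r" "r + 1 < n"
            using True False n by arith+
          show ?thesis using Qv[OF w l(5)] l by simp
        qed
        have s: "(of_nat (r - k + 1) :: 'a) + of_nat (n - (r + 1)) = of_nat k"
          unfolding of_nat_add[symmetric] using True False n by (simp)
        have "(Pm *\<^sub>v (Qm *\<^sub>v w)) $ r = (of_nat (r - k + 1) + of_nat (n - (r + 1))) * w $ r / of_nat k"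
        proof -
          have "(Pm *\<^sub>v (Qm *\<^sub>v w)) $ r = (Qm *\<^sub>v w) $ (r - k + 1) + (Qm *\<^sub>v w) $ (r + 1)"
            using P True False by simp
          also have "\<dots> = (of_nat (r - k + 1) + of_nat (n - (r + 1))) * w $ r / of_nat k"
            unfolding q1 q2 by (rule aux_div)
          finally show ?thesis .
        qed
        then show ?thesis unfolding s using k0 by simp
      next
        case F2: False
        then have rr: "r = n - 1" "r - k + 1 = k" using r False n by auto
        show ?thesis unfolding P using F2 False Qv[OF w, of k] rr n k2 by simp
      qed
    qed
  qed (use w carrier_matD(1)[OF Pm_carrier[where 'a='a]] in simp)
  then show "(Pm * Qm) *\<^sub>v w = 1\<^sub>m n *\<^sub>v w"
    using mult_vec_assoc_n[OF Pm_carrier Qm_carrier w] w by simp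
qed


lemma APv:
  assumes w: "w \<in> carrier_vec n"
  shows "Bm *\<^sub>v (Pm *\<^sub>v w) + Nm *\<^sub>v (Pm *\<^sub>v w) = Pm *\<^sub>v (Jm *\<^sub>v w)"
proof (rule eq_vecI)
  have Pw: "(Pm :: 'a mat) *\<^sub>v w \<in> carrier_vec n" by (rule mult_mat_vec_carrier[OF Pm_carrier w])
  have Jw: "(Jm :: 'a mat) *\<^sub>v w \<in> carrier_vec n" by (rule mult_mat_vec_carrier[OF Jm_carrier w])
  show "dim_vec (Bm *\<^sub>v (Pm *\<^sub>v w) + Nm *\<^sub>v (Pm *\<^sub>v w)) = dim_vec (Pm *\<^sub>v (Jm *\<^sub>v w))"
    using carrier_matD(1)[OF Pm_carrier[where 'a='a]] carrier_matD(1)[OF Nm_carrier[where 'a='a]] by simp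
  fix r assume "r < dim_vec (Pm *\<^sub>v (Jm *\<^sub>v w))"
  then have r: "r < n" using carrier_matD(1)[OF Pm_carrier[where 'a='a]] by simp
  have lhs: "(Bm *\<^sub>v (Pm *\<^sub>v w) + Nm *\<^sub>v (Pm *\<^sub>v w)) $ r = (Bm *\<^sub>v (Pm *\<^sub>v w)) $ r + (Nm *\<^sub>v (Pm *\<^sub>v w)) $ r"
    using r carrier_matD(1)[OF Nm_carrier[where 'a='a]] by simp
  note B = Bv[OF Pw r] and N = Nv[OF Pw r] and P = Pv[OF Jw r]
  have "(Bm *\<^sub>v (Pm *\<^sub>v w)) $ r + (Nm *\<^sub>v (Pm *\<^sub>v w)) $ r = (Pm *\<^sub>v (Jm *\<^sub>v w)) $ r"
  proof (cases "r < k")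
    case True
    have Nk: "(Pm *\<^sub>v w) $ (r + k) = w $ (r + 1) + (if r + k + 2 \<le> n then w $ (r + k + 1) else 0)"
      using Pv[OF w, of "r + k"] True n by (simp add: Suc_diff_le)
    have J1: "(Jm *\<^sub>v w) $ r = w $ (r + 1)" using Jv[OF w r] True n by simp
    have J2: "(Jm *\<^sub>v w) $ (k + r) = (if r + 1 < k \<and> r \<noteq> 0 then w $ (k + r + 1) else 0)"
      using Jv[OF w, of "k + r"] True n by auto
    show ?thesis
    proof (cases "r + 1 < k")
      case T2: True
      have P1: "(Pm *\<^sub>v w) $ Suc r = of_nat (k - (r + 1)) * w $ (r + 1) - of_nat (r + 1) * w $ (k + (r + 1))"
        using Pv[OF w, of "r + 1"] T2 n by simp
      have c: "(of_nat (k - (r + 1)) :: 'a) = of_nat k - of_nat r - 1" "(of_nat (k - r) :: 'a) = of_nat k - of_nat r"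
        using T2 by (simp_all add: of_nat_diff)
      have nn: "r + k + 2 \<le> n" using T2 n by simp
      show ?thesis using True T2 n unfolding B N P P1 Nk J1 J2 c
        by (cases "r = 0") (auto simp: algebra_simps nn)
    next
      case F2: False
      then have rk: "r = k - 1" "Suc r = k" using True by auto
      have nn: "\<not> r + k + 2 \<le> n" using rk n k2 by simp
      have J2': "(Jm *\<^sub>v w) $ (k + r) = 0" using J2 F2 by simp
      have kr1: "k - r = 1" using rk by simp
      show ?thesis using True rk n unfolding B N P Nk J1 J2' kr1 by (simp add: nn)
    qed
  next
    case False
    show ?thesis
    proof (cases "r + 1 < n")
      case True
      have P1: "(Pm *\<^sub>v w) $ Suc r = w $ (r - k + 2) + (if r + 3 \<le> n then w $ (r + 2) else 0)"
        using Pv[OF w, of "r + 1"] True False by (simp add: Suc_diff_le numeral_3_eq_3)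
      have J1: "(Jm *\<^sub>v w) $ (r - k + 1) = w $ (r - k + 2)"
        using Jv[OF w, of "r - k + 1"] True False n by (auto simp: Suc_diff_le)
      have J2: "(Jm *\<^sub>v w) $ (r + 1) = (if r + 2 < n then w $ (r + 2) else 0)"
        using Jv[OF w, of "r + 1"] True False n by auto
      show ?thesis using True False n unfolding B N P P1 J1 J2 by auto
    next
      case F2: False
      then have rn: "r = n - 1" "r - k + 1 = k" using r n False by auto
      have J1: "(Jm *\<^sub>v w) $ (r - k + 1) = 0" using Jv[OF w, of k] rn n k2 by simp
      show ?thesis using F2 False rn n unfolding B N P J1 by auto
    qed
  qed
  then show "(Bm *\<^sub>v (Pm *\<^sub>v w) + Nm *\<^sub>v (Pm *\<^sub>v w)) $ r = (Pm *\<^sub>v (Jm *\<^sub>v w)) $ r"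
    unfolding lhs .
qed


lemma backward:
  "\<exists>B A :: 'a :: field_char_0 mat. nilpotent_mat n B \<and> nilpotent_mat n A \<and> B * A = A * B
     \<and> has_shape B {#k, k#} \<and> has_shape A {#k + 1, k - 1#}"
proof -
  have Bc: "(Bm :: 'a mat) \<in> carrier_mat n n" by (rule Bm_carrier)
  have Nc: "(Nm :: 'a mat) \<in> carrier_mat n n" by (rule Nm_carrier)
  have Pc: "(Pm :: 'a mat) \<in> carrier_mat n n" by (rule Pm_carrier)
  have Qc: "(Qm :: 'a mat) \<in> carrier_mat n n" by (rule Qm_carrier)
  have Jc: "(Jm :: 'a mat) \<in> carrier_mat n n" by (rule Jm_carrier)
  define Am :: "'a mat" where "Am = Bm + Nm"
  have Ac: "Am \<in> carrier_mat n n" unfolding Am_def using Bc Nc by simp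
  have BN: "(Bm :: 'a mat) * Nm = Nm * Bm"
  proof (rule mat_eq_by_vec)
    show "(Bm :: 'a mat) * Nm \<in> carrier_mat n n" "(Nm :: 'a mat) * Bm \<in> carrier_mat n n"
      using Bc Nc by auto
    fix w :: "'a vec" assume w: "w \<in> carrier_vec n"
    have Nw: "Nm *\<^sub>v w \<in> carrier_vec n" by (rule mult_mat_vec_carrier[OF Nc w])
    have Bw: "Bm *\<^sub>v w \<in> carrier_vec n" by (rule mult_mat_vec_carrier[OF Bc w])
    have "Bm *\<^sub>v (Nm *\<^sub>v w) = Nm *\<^sub>v (Bm *\<^sub>v w)"
    proof (rule eq_vecI)
      fix r assume "r < dim_vec (Nm *\<^sub>v (Bm *\<^sub>v w))"
      then have r: "r < n" using carrier_matD(1)[OF Nc] by simp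
      show "(Bm *\<^sub>v (Nm *\<^sub>v w)) $ r = (Nm *\<^sub>v (Bm *\<^sub>v w)) $ r"
        unfolding Bv[OF Nw r] Nv[OF Bw r]
        using Nv[OF w, of "Suc r"] Bv[OF w, of "r + k"] r n by auto
    qed (use carrier_matD(1)[OF Nc] carrier_matD(1)[OF Bc] in simp)
    then show "(Bm * Nm) *\<^sub>v w = (Nm * Bm) *\<^sub>v w"
      using mult_vec_assoc_n[OF Bc Nc w] mult_vec_assoc_n[OF Nc Bc w] by simp
  qed
  have comm: "Bm * Am = Am * Bm"
    unfolding Am_def using mult_add_distrib_mat[OF Bc Bc Nc] add_mult_distrib_mat[OF Bc Nc Bc] BN by simp
  have AP: "Am * Pm = Pm * Jm"
  proof (rule mat_eq_by_vec)
    show "Am * Pm \<in> carrier_mat n n" "(Pm :: 'a mat) * Jm \<in> carrier_mat n n"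
      using mult_carrier_mat[OF Ac Pc] mult_carrier_mat[OF Pc Jc] by auto
    fix w :: "'a vec" assume w: "w \<in> carrier_vec n"
    have Pw: "Pm *\<^sub>v w \<in> carrier_vec n" by (rule mult_mat_vec_carrier[OF Pc w])
    have "(Am * Pm) *\<^sub>v w = Am *\<^sub>v (Pm *\<^sub>v w)" by (rule mult_vec_assoc_n[OF Ac Pc w])
    also have "\<dots> = Bm *\<^sub>v (Pm *\<^sub>v w) + Nm *\<^sub>v (Pm *\<^sub>v w)"
      unfolding Am_def by (rule add_mult_distrib_mat_vec[OF Bc Nc Pw])
    also have "\<dots> = Pm *\<^sub>v (Jm *\<^sub>v w)" by (rule APv[OF w])
    also have "\<dots> = (Pm * Jm) *\<^sub>v w" by (rule mult_vec_assoc_n[OF Pc Jc w, symmetric])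
    finally show "(Am * Pm) *\<^sub>v w = ((Pm :: 'a mat) * Jm) *\<^sub>v w" .
  qed
  have PQ': "Pm * Qm = (1\<^sub>m n :: 'a mat)" by (rule PQ)
  have QP: "Qm * Pm = (1\<^sub>m n :: 'a mat)" by (rule mat_mult_left_right_inverse[OF Pc Qc PQ'])
  have Aeq: "Am = Pm * Jm * Qm"
  proof -
    have "Am = Am * (Pm * Qm)" unfolding PQ' using Ac by simp
    also have "\<dots> = (Am * Pm) * Qm" using Ac Pc Qc by (simp add: assoc_mult_mat)
    finally show ?thesis unfolding AP .
  qed
  have wit: "similar_mat_wit Am Jm Pm Qm"
    unfolding similar_mat_wit_def Let_def using Ac Jc Pc Qc PQ' QP Aeq carrier_matD(1)[OF Ac] by auto
  have jA: "jordan_nf Am [(k + 1, 0), (k - 1, 0)]"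
    unfolding jordan_nf_def similar_mat_def using wit k2 by auto
  have jB: "jordan_nf (Bm :: 'a mat) [(k, 0), (k, 0)]"
    unfolding jordan_nf_def using similar_mat_refl[OF Bc] k2 by auto
  have sA: "has_shape Am {#k + 1, k - 1#}" unfolding has_shape_def using jA by (intro exI[of _ "[(k + 1, 0), (k - 1, 0)]"]) auto
  have sB: "has_shape (Bm :: 'a mat) {#k, k#}" unfolding has_shape_def using jB by (intro exI[of _ "[(k, 0), (k, 0)]"]) auto
  have "(Bm :: 'a mat) ^\<^sub>m k = 0\<^sub>m (k + k) (k + k)" by (rule jm2_pow_zero) auto
  then have nB: "nilpotent_mat n (Bm :: 'a mat)" unfolding nilpotent_mat_def using Bc nk by auto
  have J0: "(Jm :: 'a mat) ^\<^sub>m (k + 1) = 0\<^sub>m (k + 1 + (k - 1)) (k + 1 + (k - 1))" by (rule jm2_pow_zero) auto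
  have e: "k + 1 + (k - 1) = n" using nk k2 by simp
  have J0': "(Jm :: 'a mat) ^\<^sub>m (k + 1) = 0\<^sub>m n n" using J0 unfolding e .
  have "Am ^\<^sub>m (k + 1) = Pm * (Jm :: 'a mat) ^\<^sub>m (k + 1) * Qm" by (rule similar_mat_wit_pow_id[OF wit])
  also have "\<dots> = Pm * 0\<^sub>m n n * Qm" unfolding J0' ..
  also have "\<dots> = 0\<^sub>m n n" using Pc Qc by simp
  finally have "Am ^\<^sub>m (k + 1) = 0\<^sub>m n n" .
  then have nA: "nilpotent_mat n Am" unfolding nilpotent_mat_def using Ac by blast
  show ?thesis using nB nA comm sB sA by blast
qed

end

theorem theorem3p1:
  fixes n l1 l2 m1 m2 :: nat
  assumes "alg_closed_field TYPE('a :: field_char_0)"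
    and "l1 \<ge> l2" "l2 \<ge> 1" "l1 + l2 = n"
    and "m1 \<ge> m2" "m2 \<ge> 1" "m1 + m2 = n"
    and "(l1, l2) \<noteq> (m1, m2)"
  shows "(\<exists>B A :: 'a mat. nilpotent_mat n B \<and> nilpotent_mat n A \<and> B * A = A * B
            \<and> has_shape B {#l1, l2#} \<and> has_shape A {#m1, m2#})
     \<longleftrightarrow> (even n \<and>
          (((l1, l2) = (n div 2, n div 2) \<and> (m1, m2) = (n div 2 + 1, n div 2 - 1)) \<or>
           ((m1, m2) = (n div 2, n div 2) \<and> (l1, l2) = (n div 2 + 1, n div 2 - 1))))"
proof
  assume "\<exists>B A :: 'a mat. nilpotent_mat n B \<and> nilpotent_mat n A \<and> B * A = A * B
            \<and> has_shape B {#l1, l2#} \<and> has_shape A {#m1, m2#}"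
  then obtain B A :: "'a mat" where nB: "nilpotent_mat n B" and nA: "nilpotent_mat n A" and c: "B * A = A * B"
    and sB: "has_shape B {#l1, l2#}" and sA: "has_shape A {#m1, m2#}" by blast
  consider "l1 = m1" | "m1 < l1" | "l1 < m1" by arith
  then show "even n \<and>
          (((l1, l2) = (n div 2, n div 2) \<and> (m1, m2) = (n div 2 + 1, n div 2 - 1)) \<or>
           ((m1, m2) = (n div 2, n div 2) \<and> (l1, l2) = (n div 2 + 1, n div 2 - 1)))"
  proof cases
    case 1 then show ?thesis using assms by auto
  next
    case 2
    from forward[OF nB nA c sB sA assms(2,3,5,6,4,7) 2] have e: "l1 = l2 + 2" "m1 = m2" by auto
    then have "n = 2 * (l2 + 1)" "m1 = l2 + 1" using assms by auto
    then have "n div 2 = l2 + 1" "even n" by auto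
    then show ?thesis using e assms \<open>m1 = l2 + 1\<close> by auto
  next
    case 3
    from forward[OF nA nB c[symmetric] sA sB assms(5,6,2,3,7,4) 3] have e: "m1 = m2 + 2" "l1 = l2" by auto
    then have "n = 2 * (m2 + 1)" "l1 = m2 + 1" using assms by auto
    then have "n div 2 = m2 + 1" "even n" by auto
    then show ?thesis using e assms \<open>l1 = m2 + 1\<close> by auto
  qed
next
  assume R: "even n \<and>
          (((l1, l2) = (n div 2, n div 2) \<and> (m1, m2) = (n div 2 + 1, n div 2 - 1)) \<or>
           ((m1, m2) = (n div 2, n div 2) \<and> (l1, l2) = (n div 2 + 1, n div 2 - 1)))"
  define k where "k = n div 2"
  have nk: "n = 2 * k" using R unfolding k_def by auto
  from R have "((l1, l2) = (k, k) \<and> (m1, m2) = (k + 1, k - 1)) \<or> ((m1, m2) = (k, k) \<and> (l1, l2) = (k + 1, k - 1))"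
    unfolding k_def by auto
  then show "\<exists>B A :: 'a mat. nilpotent_mat n B \<and> nilpotent_mat n A \<and> B * A = A * B
            \<and> has_shape B {#l1, l2#} \<and> has_shape A {#m1, m2#}"
  proof
    assume h: "(l1, l2) = (k, k) \<and> (m1, m2) = (k + 1, k - 1)"
    then have k2: "k \<ge> 2" using assms by auto
    from backward[OF k2 nk] h show ?thesis by auto
  next
    assume h: "(m1, m2) = (k, k) \<and> (l1, l2) = (k + 1, k - 1)"
    then have k2: "k \<ge> 2" using assms by auto
    from backward[OF k2 nk] h show ?thesis by (metis prod.inject)
  qed
qed

end
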